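(* Let $0<\phi<90^\circ$ be the vertical apex angle of the obstacle sensor, let $v_{xy}>0$ and $v_z=\tan(\phi/2)\,v_{xy}$, and consider the visibility-constrained planning graph described in the context. For a node at position $p_n$ and a target position $p_t$ (both voxel centers), let $d=p_n-p_t=(d_x,d_y,d_z)$ and define $$z_e=\min\Big(|d_z|,\ \tan\tfrac{\phi}{2}\sqrt{d_x^2+d_y^2}\Big),\qquad z_z=\frac{\max(0,|d_z|-z_e)}{v_z}\sqrt{v_{xy}^2+v_z^2},$$ $$h(d)=\sqrt{d_x^2+d_y^2+z_e^2}+z_z .$$ Then $h$ is an admissible heuristic for A* search in this graph, i.e. for every node, $h(p_n-p_t)$ is at most the cost of a shortest path in the graph from that node to any node located at the target position $p_t$.
   Context: Planning graph: space is partitioned into an anisotropic regular voxel grid whose voxels have horizontal edge lengths $v_{xy}$ (in $x$ and $y$) and height $v_z=\tan(\phi/2)v_{xy}$. Vertices correspond to voxel centers (possibly augmented by an additional discrete flight-direction coordinate taking one of eight planar directions; this extra coordinate only restricts which edges are present). Each voxel center is connected by edges to the centers of the voxels in its 26-neighborhood (Moore neighborhood), except that the two edges to the voxels directly above and directly below are removed; some further edges (large changes of flight direction) may also be removed. Thus every edge changes position by a vector $(a v_{xy}, b v_{xy}, c v_z)$ with $a,b,c\in\{-1,0,1\}$ and $(a,b)\neq(0,0)$. The cost of an edge is at least the Euclidean length of this displacement (additional nonnegative costs such as obstacle-proximity costs may be added), and the cost of a path is the sum of its edge costs. A heuristic is admissible if it never overestimates the cost of the cheapest path to the target. *)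

theory Defs
  imports "HOL-Analysis.Analysis"
begin

type_synonym pos3 = "real \<times> real \<times> real"

definition len3 :: "pos3 \<Rightarrow> real" where
  "len3 p = (case p of (x, y, z) \<Rightarrow> sqrt (x^2 + y^2 + z^2))"

definition diff3 :: "pos3 \<Rightarrow> pos3 \<Rightarrow> pos3" where
  "diff3 p q = (case p of (x1, y1, z1) \<Rightarrow> case q of (x2, y2, z2) \<Rightarrow> (x1 - x2, y1 - y2, z1 - z2))"

definition vz_of :: "real \<Rightarrow> real \<Rightarrow> real" where
  "vz_of phi vxy = tan (phi / 2) * vxy"

definition voxel_center :: "real \<Rightarrow> real \<Rightarrow> pos3 \<Rightarrow> pos3 \<Rightarrow> bool" where
  "voxel_center vxy vz org p \<longleftrightarrow> (\<exists>i j k :: int.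
      p = (fst org + of_int i * vxy, fst (snd org) + of_int j * vxy, snd (snd org) + of_int k * vz))"

definition allowed_move :: "real \<Rightarrow> real \<Rightarrow> pos3 \<Rightarrow> bool" where
  "allowed_move vxy vz d \<longleftrightarrow> (\<exists>a b c :: int. a \<in> {-1,0,1} \<and> b \<in> {-1,0,1} \<and> c \<in> {-1,0,1}
      \<and> (a, b) \<noteq> (0, 0) \<and> d = (of_int a * vxy, of_int b * vxy, of_int c * vz))"

definition heur :: "real \<Rightarrow> real \<Rightarrow> pos3 \<Rightarrow> real" where
  "heur phi vxy d = (case d of (dx, dy, dz) \<Rightarrow>
     let vz = vz_of phi vxy;
         ze = min \<bar>dz\<bar> (tan (phi / 2) * sqrt (dx^2 + dy^2));
         zz = max 0 (\<bar>dz\<bar> - ze) / vz * sqrt (vxy^2 + vz^2)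
     in sqrt (dx^2 + dy^2 + ze^2) + zz)"

definition is_path :: "('v \<Rightarrow> 'v \<Rightarrow> bool) \<Rightarrow> 'v list \<Rightarrow> bool" where
  "is_path E vs \<longleftrightarrow> vs \<noteq> [] \<and> (\<forall>i. Suc i < length vs \<longrightarrow> E (vs ! i) (vs ! Suc i))"

definition path_cost :: "('v \<Rightarrow> 'v \<Rightarrow> real) \<Rightarrow> 'v list \<Rightarrow> real" where
  "path_cost cost vs = (\<Sum>i < length vs - 1. cost (vs ! i) (vs ! Suc i))"

end

theory Submission
  imports Defs
begin

lemma len3_norm: "len3 p = norm p"
  by (cases p) (simp add: len3_def norm_prod_def add.assoc)

lemma diff3_minus: "diff3 p q = p - q"
  by (cases p; cases q) (simp add: diff3_def)

definition NN :: "real \<Rightarrow> pos3 \<Rightarrow> real" where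
  "NN K d = max (norm d) (\<bar>snd (snd d)\<bar> * K)"

lemma NN_add: "K \<ge> 0 \<Longrightarrow> NN K (a + b) \<le> NN K a + NN K b"
proof -
  assume K: "K \<ge> 0"
  have 1: "norm (a + b) \<le> norm a + norm b" by (rule norm_triangle_ineq)
  have "\<bar>snd (snd (a + b))\<bar> \<le> \<bar>snd (snd a)\<bar> + \<bar>snd (snd b)\<bar>" by simp
  hence 2: "\<bar>snd (snd (a + b))\<bar> * K \<le> \<bar>snd (snd a)\<bar> * K + \<bar>snd (snd b)\<bar> * K"
    using K by (metis distrib_right mult_right_mono)
  show ?thesis using 1 2 unfolding NN_def by linarith
qed

lemma NN_minus: "NN K (- d) = NN K d"
  by (simp add: NN_def)

lemma path_cons2:
  "is_path E (u # w # r) \<Longrightarrow> E u w \<and> is_path E (w # r)"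
proof -
  assume H: "is_path E (u # w # r)"
  have A: "\<And>i. Suc i < length (u # w # r) \<Longrightarrow> E ((u # w # r) ! i) ((u # w # r) ! Suc i)"
    using H unfolding is_path_def by blast
  have "E u w" using A[of 0] by simp
  moreover have "is_path E (w # r)"
    unfolding is_path_def using A by (metis Suc_less_eq length_Cons list.distinct(1) nth_Cons_Suc)
  ultimately show ?thesis by blast
qed

lemma path_cost_cons2:
  "path_cost c (u # w # r) = c u w + path_cost c (w # r)"
  unfolding path_cost_def
  apply (simp only: length_Cons diff_Suc_1)
  apply (subst sum.lessThan_Suc_shift)
  apply simp
  done

lemma path_bound:
  assumes K: "K \<ge> 0"
    and step: "\<And>u w. E u w \<Longrightarrow> NN K (pos w - pos u) \<le> cost u w"
  shows "is_path E vs \<Longrightarrow> NN K (pos (last vs) - pos (hd vs)) \<le> path_cost cost vs"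
proof (induction vs rule: induct_list012)
  case 1 then show ?case by (simp add: is_path_def)
next
  case (2 x) then show ?case by (simp add: NN_def path_cost_def)
next
  case (3 u w r)
  from path_cons2[OF 3(3)] have e: "E u w" and p: "is_path E (w # r)" by auto
  have IH: "NN K (pos (last (w # r)) - pos w) \<le> path_cost cost (w # r)"
    using 3(2)[OF p] by simp
  have "pos (last (u # w # r)) - pos (hd (u # w # r))
      = (pos (last (w # r)) - pos w) + (pos w - pos u)" by simp
  hence "NN K (pos (last (u # w # r)) - pos (hd (u # w # r)))
      \<le> NN K (pos (last (w # r)) - pos w) + NN K (pos w - pos u)"
    using NN_add[OF K] by metis
  also have "\<dots> \<le> path_cost cost (w # r) + cost u w" using IH step[OF e] by linarith
  finally show ?case by (simp add: path_cost_cons2)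
qed


lemma heur_le:
  fixes t vxy :: real
  assumes t: "t = tan (phi / 2)" and tp: "0 < t" and v: "0 < vxy"
  shows "heur phi vxy d \<le> NN (sqrt (1 + t^2) / t) d"
proof -
  obtain dx dy dz where d: "d = (dx, dy, dz)" by (cases d) auto
  define r where "r = sqrt (dx^2 + dy^2)"
  define S where "S = sqrt (1 + t^2)"
  have r0: "r \<ge> 0" unfolding r_def by simp
  have S0: "S \<ge> 0" unfolding S_def by simp
  have r2: "r^2 = dx^2 + dy^2" unfolding r_def by simp
  have nd: "norm d = sqrt (dx^2 + dy^2 + dz^2)"
    using len3_norm[of d] by (simp add: d len3_def)
  have h: "heur phi vxy d = sqrt (dx^2 + dy^2 + (min \<bar>dz\<bar> (t * r))^2)
      + max 0 (\<bar>dz\<bar> - min \<bar>dz\<bar> (t * r)) / (t * vxy) * sqrt (vxy^2 + (t * vxy)^2)"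
    unfolding heur_def d vz_of_def Let_def r_def t by simp
  show ?thesis
  proof (cases "\<bar>dz\<bar> \<le> t * r")
    case True
    then have "heur phi vxy d = norm d" using h nd by (simp add: min_def)
    then show ?thesis unfolding NN_def by simp
  next
    case False
    then have m: "min \<bar>dz\<bar> (t * r) = t * r" by simp
    have a: "sqrt (dx^2 + dy^2 + (t*r)^2) = r * S"
    proof -
      have "dx^2 + dy^2 + (t*r)^2 = r^2 * (1 + t^2)" using r2 by (simp add: algebra_simps)
      then show ?thesis unfolding S_def using r0 by (simp add: real_sqrt_mult)
    qed
    have b: "sqrt (vxy^2 + (t * vxy)^2) = vxy * S"
    proof -
      have "vxy^2 + (t * vxy)^2 = vxy^2 * (1 + t^2)" by (simp add: algebra_simps)
      then show ?thesis unfolding S_def using v by (simp add: real_sqrt_mult)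
    qed
    have "heur phi vxy d = r * S + (\<bar>dz\<bar> - t * r) / (t * vxy) * (vxy * S)"
      using h m a b False by simp
    also have "\<dots> = \<bar>dz\<bar> * (S / t)" using tp v by (simp add: field_simps)
    finally show ?thesis unfolding NN_def S_def d by simp
  qed
qed

theorem corollary1:
  fixes phi vxy :: real
    and pos :: "'v \<Rightarrow> pos3"
    and E :: "'v \<Rightarrow> 'v \<Rightarrow> bool"
    and cost :: "'v \<Rightarrow> 'v \<Rightarrow> real"
    and org :: pos3
    and vs :: "'v list"
    and pt :: pos3
  assumes "0 < phi" and "phi < pi / 2" and "0 < vxy"
    and "\<And>v. voxel_center vxy (vz_of phi vxy) org (pos v)"
    and "\<And>u w. E u w \<Longrightarrow> allowed_move vxy (vz_of phi vxy) (diff3 (pos w) (pos u))"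
    and "\<And>u w. E u w \<Longrightarrow> cost u w \<ge> len3 (diff3 (pos w) (pos u))"
    and "is_path E vs"
    and "pos (last vs) = pt"
  shows "heur phi vxy (diff3 (pos (hd vs)) pt) \<le> path_cost cost vs"
proof -
  define t where "t = tan (phi / 2)"
  define K where "K = sqrt (1 + t^2) / t"
  have tp: "0 < t" unfolding t_def using assms(1,2) by (intro tan_gt_zero) auto
  have K0: "K \<ge> 0" unfolding K_def using tp by simp
  have step: "NN K (pos w - pos u) \<le> cost u w" if e: "E u w" for u w
  proof -
    obtain a b c :: int where abc: "a \<in> {-1,0,1}" "b \<in> {-1,0,1}" "c \<in> {-1,0,1}"
      "(a, b) \<noteq> (0, 0)"
      and dd: "pos w - pos u = (of_int a * vxy, of_int b * vxy, of_int c * (t * vxy))"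
      using assms(5)[OF e] unfolding allowed_move_def diff3_minus vz_of_def t_def by blast
    have c2: "(real_of_int c)^2 \<le> 1" using abc(3) by auto
    have ab2: "1 \<le> (real_of_int a)^2 + (real_of_int b)^2" using abc(1,2,4) by auto
    have nd: "norm (pos w - pos u) = sqrt ((of_int a * vxy)^2 + (of_int b * vxy)^2 + (of_int c * (t * vxy))^2)"
      using len3_norm[of "pos w - pos u"] by (simp add: dd len3_def)
    have sq: "(\<bar>of_int c * (t * vxy)\<bar> * K)^2 = (real_of_int c)^2 * vxy^2 * (1 + t^2)"
      unfolding K_def using tp by (simp add: power_mult_distrib power_divide field_simps)
    have "(real_of_int c)^2 * vxy^2 * (1 + t^2) = (real_of_int c)^2 * vxy^2 + (real_of_int c)^2 * (t * vxy)^2"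
      by (simp add: algebra_simps power_mult_distrib)
    also have "\<dots> \<le> ((real_of_int a)^2 + (real_of_int b)^2) * vxy^2 + (real_of_int c)^2 * (t * vxy)^2"
      using c2 ab2 by (intro add_right_mono mult_right_mono) auto
    also have "\<dots> = (of_int a * vxy)^2 + (of_int b * vxy)^2 + (of_int c * (t * vxy))^2"
      by (simp add: algebra_simps power_mult_distrib)
    finally have "\<bar>of_int c * (t * vxy)\<bar> * K \<le> norm (pos w - pos u)"
      unfolding nd using sq by (intro real_le_rsqrt) simp
    hence "NN K (pos w - pos u) = norm (pos w - pos u)" unfolding NN_def by (simp add: dd)
    also have "\<dots> \<le> cost u w" using assms(6)[OF e] by (simp add: len3_norm diff3_minus)
    finally show ?thesis .
  qed
  have "NN K (pos (last vs) - pos (hd vs)) \<le> path_cost cost vs"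
    using path_bound[OF K0, of E pos cost, OF step] assms(7) by blast
  moreover have "NN K (pos (last vs) - pos (hd vs)) = NN K (pos (hd vs) - pt)"
    using NN_minus[of K "pos (hd vs) - pt"] assms(8) by simp
  moreover have "heur phi vxy (diff3 (pos (hd vs)) pt) \<le> NN K (pos (hd vs) - pt)"
    using heur_le[OF t_def tp assms(3)] unfolding K_def diff3_minus by blast
  ultimately show ?thesis by linarith
qed

end
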